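(* Let $\mathbb F$ be any field, $n\ge k\ge1$, let $\mathbf z\in\mathbb F^n$ with $\mathbf z_1=-1$, and let $\mathcal K=\{X\in M_{n\times k}(\mathbb F): \mathbf z^tX=0\}$. Then $\det_{n,k}(X)=0$ for all $X\in\mathcal K$ if and only if $$1+\sum_{\alpha=1}^k \mathbf z_{c(\alpha)}(-1)^{\alpha-c(\alpha)}=0$$ for every $k$-element subset $c=\{c(1)<\dots<c(k)\}$ of $[n]$ with $1\notin c$.
   Context: Cullis' determinant: for $n\ge k$, $\det_{n,k}(X)=\sum_{c}\operatorname{sgn}(c)\det(X[c|))$, sum over $k$-subsets $c=\{c(1)<\dots<c(k)\}$ of $[n]=\{1,\dots,n\}$, $X[c|)$ the $k\times k$ submatrix formed by the rows with indices in $c$, $\operatorname{sgn}(c)=(-1)^{\sum_{\alpha=1}^k(c(\alpha)-\alpha)}$. *)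

theory Defs
  imports "HOL-Analysis.Analysis" "HOL-Combinatorics.Permutations"
begin

text \<open>Matrices are functions nat => nat => 'a, with row indices 1..n and column
indices 1..k (entries outside this range are ignored). Vectors are nat => 'a
with indices 1..n.\<close>

definition elem_of :: "nat set \<Rightarrow> nat \<Rightarrow> nat" where
  "elem_of c \<alpha> = sorted_list_of_set c ! (\<alpha> - 1)"

definition det_k :: "nat \<Rightarrow> (nat \<Rightarrow> nat \<Rightarrow> 'a::comm_ring_1) \<Rightarrow> 'a" where
  "det_k k A = (\<Sum>p | p permutes {1..k}. of_int (sign p) * (\<Prod>i=1..k. A i (p i)))"

definition rowsub :: "nat set \<Rightarrow> (nat \<Rightarrow> nat \<Rightarrow> 'a) \<Rightarrow> nat \<Rightarrow> nat \<Rightarrow> 'a" where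
  "rowsub c X = (\<lambda>\<alpha> j. X (elem_of c \<alpha>) j)"

definition sgn_sub :: "nat set \<Rightarrow> 'a::comm_ring_1" where
  "sgn_sub c = (-1) ^ (\<Sum>\<alpha>=1..card c. elem_of c \<alpha> - \<alpha>)"

definition cullis_det :: "nat \<Rightarrow> nat \<Rightarrow> (nat \<Rightarrow> nat \<Rightarrow> 'a::comm_ring_1) \<Rightarrow> 'a" where
  "cullis_det n k X = (\<Sum>c | c \<subseteq> {1..n} \<and> card c = k. sgn_sub c * det_k k (rowsub c X))"

end

theory Submission
  imports Defs "HOL-Library.Disjoint_Sets"
begin


lemma elem_of_basic:
  assumes "finite c" "card c = k"
  shows "bij_betw (elem_of c) {1..k} c"
    and "\<And>a b. a \<in> {1..k} \<Longrightarrow> b \<in> {1..k} \<Longrightarrow> a < b \<Longrightarrow> elem_of c a < elem_of c b"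
proof -
  let ?L = "sorted_list_of_set c"
  have len: "length ?L = k" using assms by simp
  have dist: "distinct ?L" by simp
  have st: "sorted_wrt (<) ?L" by simp
  show "bij_betw (elem_of c) {1..k} c"
  proof (rule bij_betw_imageI)
    show "inj_on (elem_of c) {1..k}"
      unfolding inj_on_def elem_of_def using dist len
      by (auto simp: nth_eq_iff_index_eq)
    show "elem_of c ` {1..k} = c"
    proof
      show "elem_of c ` {1..k} \<subseteq> c" unfolding elem_of_def using len assms(1)
        by (auto intro!: nth_mem[where xs="?L", simplified set_sorted_list_of_set[OF assms(1)]])
      show "c \<subseteq> elem_of c ` {1..k}"
      proof
        fix x assume "x \<in> c"
        then have "x \<in> set ?L" using assms(1) by simp
        then obtain i where "i < k" "?L ! i = x" using len by (auto simp: in_set_conv_nth)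
        then show "x \<in> elem_of c ` {1..k}" unfolding elem_of_def
          by (intro image_eqI[of _ _ "Suc i"]) auto
      qed
    qed
  qed
  fix a b assume "a \<in> {1..k}" "b \<in> {1..k}" "a < b"
  then show "elem_of c a < elem_of c b" unfolding elem_of_def using st len
    by (auto simp: sorted_wrt_iff_nth_less)
qed

lemma elem_of_unique:
  assumes "finite c" "card c = m" "f ` {1..m} = c"
    and "\<And>a b. a \<in> {1..m} \<Longrightarrow> b \<in> {1..m} \<Longrightarrow> a < b \<Longrightarrow> f a < f b"
    and "b \<in> {1..m}"
  shows "elem_of c b = f b"
proof -
  let ?M = "map f [1..<Suc m]"
  have "sorted_wrt (<) ?M"
    unfolding sorted_wrt_iff_nth_less using assms(4) by (auto simp del: upt_Suc)
  then have "sorted ?M" "distinct ?M" by (auto simp: strict_sorted_iff)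
  moreover have "set ?M = c" using assms(3) by (auto simp: atLeastLessThanSuc_atLeastAtMost)
  ultimately have "sorted_list_of_set c = ?M"
    using assms(1) by (intro sorted_distinct_set_unique) auto
  then show ?thesis unfolding elem_of_def using assms(5)
    by (auto simp del: upt_Suc) 
qed

lemma det_cong:
  assumes "\<And>i j. i \<in> {1..k} \<Longrightarrow> j \<in> {1..k} \<Longrightarrow> A i j = B i j"
  shows "det_k k A = det_k k B"
  unfolding det_k_def
proof (rule sum.cong[OF refl])
  fix p assume "p \<in> {p. p permutes {1..k}}"
  then have p: "p permutes {1..k}" by simp
  show "of_int (sign p) * (\<Prod>i = 1..k. A i (p i)) = of_int (sign p) * (\<Prod>i = 1..k. B i (p i))"
    using assms permutes_in_image[OF p] by (auto intro!: prod.cong)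
qed

lemma det_zero_row:
  assumes "a \<in> {1..k}" "\<And>j. j \<in> {1..k} \<Longrightarrow> A a j = 0"
  shows "det_k k A = 0"
  unfolding det_k_def
proof (rule sum.neutral, rule ballI)
  fix p assume "p \<in> {p. p permutes {1..k}}"
  then have p: "p permutes {1..k}" by simp
  have "p a \<in> {1..k}" using assms(1) permutes_in_image[OF p] by simp
  then have "(\<Prod>i = 1..k. A i (p i)) = 0"
    using assms by (intro prod_zero bexI[of _ a]) auto
  then show "of_int (sign p) * (\<Prod>i = 1..k. A i (p i)) = 0" by simp
qed

lemma det_id:
  shows "det_k k (\<lambda>i j. if i = j then 1 else 0) = 1"
proof -
  let ?f = "\<lambda>p. of_int (sign p) * (\<Prod>i = 1..k. (\<lambda>i j. if i = j then 1 else 0) i (p i)) :: 'a"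
  have idin: "id \<in> {p. p permutes {1..k}}" by (simp add: permutes_id)
  have "det_k k (\<lambda>i j. if i = j then 1 else 0) = ?f id + sum ?f ({p. p permutes {1..k}} - {id})"
    unfolding det_k_def by (rule sum.remove[OF _ idin]) (simp add: finite_permutations)
  also have "sum ?f ({p. p permutes {1..k}} - {id}) = 0"
  proof (rule sum.neutral, rule ballI)
    fix p assume "p \<in> {p. p permutes {1..k}} - {id}"
    then have p: "p permutes {1..k}" and ne: "p \<noteq> id" by auto
    obtain i where "p i \<noteq> i" using ne by (auto simp: fun_eq_iff)
    moreover then have "i \<in> {1..k}" using p by (meson permutes_not_in)
    ultimately have "(\<Prod>i = 1..k. (\<lambda>i j. if i = j then 1 else 0) i (p i)) = (0::'a)"
      by (intro prod_zero bexI[of _ i]) auto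
    then show "?f p = 0" by simp
  qed
  finally show ?thesis by simp
qed

lemma det_rows_perm:
  assumes s: "s permutes {1..k}"
  shows "det_k k (\<lambda>i j. A (s i) j) = of_int (sign s) * det_k k A"
proof -
  have fin: "finite {1..k::nat}" by simp
  have "det_k k (\<lambda>i j. A (s i) j) = (\<Sum>q | q permutes {1..k}. of_int (sign (q \<circ> s)) * (\<Prod>i = 1..k. A (s i) ((q \<circ> s) i)))"
    unfolding det_k_def by (subst sum_permutations_compose_right[OF s]) simp
  also have "\<dots> = (\<Sum>q | q permutes {1..k}. of_int (sign s) * (of_int (sign q) * (\<Prod>i = 1..k. A i (q i))))"
  proof (rule sum.cong[OF refl])
    fix q assume "q \<in> {q. q permutes {1..k}}"
    then have q: "q permutes {1..k}" by simp
    have "(\<Prod>i = 1..k. A (s i) ((q \<circ> s) i)) = (\<Prod>i = 1..k. A i (q i))"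
      using prod.permute[OF s, of "\<lambda>i. A i (q i)"] by (simp add: o_def)
    moreover have "sign (q \<circ> s) = sign q * sign s"
      using permutation_permutes fin q s by (intro sign_compose) blast+
    ultimately show "of_int (sign (q \<circ> s)) * (\<Prod>i = 1..k. A (s i) ((q \<circ> s) i)) =
      of_int (sign s) * (of_int (sign q) * (\<Prod>i = 1..k. A i (q i)))" by (simp add: algebra_simps)
  qed
  also have "\<dots> = of_int (sign s) * det_k k A" unfolding det_k_def by (simp add: sum_distrib_left)
  finally show ?thesis .
qed

lemma det_alt:
  assumes ab: "a \<in> {1..k}" "b \<in> {1..k}" "a \<noteq> b" and eq: "\<And>j. A a j = A b j"
  shows "det_k k A = 0"
  unfolding det_k_def
proof (rule sum_involution_eq_0[where h = "\<lambda>p. p \<circ> Transposition.transpose a b"])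
  have fin: "finite {1..k::nat}" by simp
  let ?t = "Transposition.transpose a b"
  have t: "?t permutes {1..k}" using ab by (intro permutes_swap_id) auto
  fix p assume "p \<in> {p. p permutes {1..k}}"
  then have p: "p permutes {1..k}" by simp
  show "p \<circ> ?t \<in> {p. p permutes {1..k}}" using p t by (simp add: permutes_compose)
  show "p \<circ> ?t \<circ> ?t = p" by (simp add: fun_eq_iff)
  show "p \<circ> ?t \<noteq> p"
  proof
    assume "p \<circ> ?t = p"
    then have "p b = p a" by (metis comp_apply transpose_apply_first)
    then show False using p ab by (metis permutes_inj inj_eq)
  qed
  have sg: "sign (p \<circ> ?t) = - sign p"
    using permutation_permutes fin p t ab by (subst sign_compose) (blast, blast, simp add: sign_swap_id)
  have "(\<Prod>i = 1..k. A i ((p \<circ> ?t) i)) = (\<Prod>i = 1..k. A (?t i) (p i))"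
    using prod.permute[OF t, of "\<lambda>i. A (?t i) (p i)"] by (simp add: o_def)
  also have "\<dots> = (\<Prod>i = 1..k. A i (p i))"
    by (rule prod.cong[OF refl]) (auto simp: Transposition.transpose_def eq)
  finally show "of_int (sign (p \<circ> ?t)) * (\<Prod>i = 1..k. A i ((p \<circ> ?t) i)) + of_int (sign p) * (\<Prod>i = 1..k. A i (p i)) = 0"
    using sg by simp
qed

lemma det_lin1:
  assumes k: "1 \<le> k" and R: "finite R"
  shows "det_k k (\<lambda>i j. if i = 1 then (\<Sum>r\<in>R. w r * B r j) else A i j)
       = (\<Sum>r\<in>R. w r * det_k k (\<lambda>i j. if i = 1 then B r j else A i j))"
proof -
  have split: "\<And>g. prod g {1..k} = g 1 * prod g {2..k}" using k by (simp add: prod.atLeast_Suc_atMost numeral_2_eq_2)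
  have "det_k k (\<lambda>i j. if i = 1 then (\<Sum>r\<in>R. w r * B r j) else A i j)
     = (\<Sum>p | p permutes {1..k}. \<Sum>r\<in>R. w r * (of_int (sign p) * (B r (p 1) * (\<Prod>i = 2..k. A i (p i)))))"
    unfolding det_k_def split
    by (rule sum.cong[OF refl]) (simp add: sum_distrib_left sum_distrib_right algebra_simps)
  also have "\<dots> = (\<Sum>r\<in>R. \<Sum>p | p permutes {1..k}. w r * (of_int (sign p) * (B r (p 1) * (\<Prod>i = 2..k. A i (p i)))))"
    by (rule sum.swap)
  also have "\<dots> = (\<Sum>r\<in>R. w r * det_k k (\<lambda>i j. if i = 1 then B r j else A i j))"
    unfolding det_k_def split by (simp add: sum_distrib_left)
  finally show ?thesis .
qed

definition cyc :: "nat \<Rightarrow> nat \<Rightarrow> nat" where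
  "cyc a = (\<lambda>b. if b = 1 then a else if b \<le> a then b - 1 else b)"

lemma cyc_props:
  assumes "1 \<le> a" "a \<le> k"
  shows "cyc a permutes {1..k} \<and> sign (cyc a) = (-1) ^ (a - 1)"
  using assms
proof (induction a)
  case 0
  then show ?case by simp
next
  case (Suc a)
  show ?case
  proof (cases "a = 0")
    case True
    then have "cyc (Suc a) = id" by (auto simp: cyc_def fun_eq_iff)
    then show ?thesis using True permutes_id[of "{1..k}"] by (simp add: id_def)
  next
    case False
    then have IH: "cyc a permutes {1..k} \<and> sign (cyc a) = (-1) ^ (a - 1)" using Suc by simp
    have eq: "cyc (Suc a) = Transposition.transpose a (Suc a) \<circ> cyc a"
      using False by (auto simp: cyc_def fun_eq_iff Transposition.transpose_def)
    have t: "Transposition.transpose a (Suc a) permutes {1..k}"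
      using False Suc.prems by (intro permutes_swap_id) auto
    have fin: "finite {1..k::nat}" by simp
    have "sign (cyc (Suc a)) = sign (Transposition.transpose a (Suc a)) * sign (cyc a)"
      unfolding eq using permutation_permutes fin t IH by (intro sign_compose) blast+
    also have "\<dots> = (-1) ^ (Suc a - 1)" using IH False by (simp add: sign_swap_id power_eq_if)
    finally have sg: "sign (cyc (Suc a)) = (-1) ^ (Suc a - 1)" .
    have "cyc (Suc a) permutes {1..k}"
      unfolding eq using IH t by (intro permutes_compose) auto
    then show ?thesis using sg by (intro conjI)
  qed
qed

lemma elem_of_in:
  assumes "finite c" "card c = k" "a \<in> {1..k}"
  shows "elem_of c a \<in> c"
  using elem_of_basic(1)[OF assms(1,2)] assms(3) by (meson bij_betwE)

lemma elem_of_mono: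
  assumes "finite c" "card c = k" "a \<in> {1..k}" "b \<in> {1..k}"
  shows "elem_of c a < elem_of c b \<longleftrightarrow> a < b"
    and "elem_of c a = elem_of c b \<longleftrightarrow> a = b"
proof -
  have m: "\<And>a b. a \<in> {1..k} \<Longrightarrow> b \<in> {1..k} \<Longrightarrow> a < b \<Longrightarrow> elem_of c a < elem_of c b"
    using elem_of_basic(2)[OF assms(1,2)] by blast
  show "elem_of c a < elem_of c b \<longleftrightarrow> a < b"
    using m[of a b] m[of b a] assms(3,4) by (metis less_asym' linorder_neqE_nat)
  show "elem_of c a = elem_of c b \<longleftrightarrow> a = b"
    using m[of a b] m[of b a] assms(3,4) by (metis less_irrefl linorder_neqE_nat)
qed

lemma elem_of_ge:
  assumes "finite c" "card c = k" "a \<in> {1..k}" "\<forall>x\<in>c. 1 \<le> x"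
  shows "a \<le> elem_of c a"
proof -
  have bij: "bij_betw (elem_of c) {1..k} c" by (rule elem_of_basic(1)[OF assms(1,2)])
  have "elem_of c ` {1..a} \<subseteq> {1..elem_of c a}"
  proof
    fix y assume "y \<in> elem_of c ` {1..a}"
    then obtain b where b: "b \<in> {1..a}" "y = elem_of c b" by auto
    then have "b \<in> {1..k}" using assms(3) by auto
    then have "y \<in> c" "y \<le> elem_of c a"
      using elem_of_in[OF assms(1,2)] elem_of_mono[OF assms(1,2) _ assms(3)] b
      by (auto simp: le_less)
    then show "y \<in> {1..elem_of c a}" using assms(4) by auto
  qed
  moreover have "inj_on (elem_of c) {1..a}"
    using bij assms(3) by (auto simp: bij_betw_def intro: inj_on_subset)
  ultimately have "card {1..a} \<le> card {1..elem_of c a}"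
    by (metis card_image card_mono finite_atLeastAtMost)
  then show ?thesis by simp
qed

lemma sum_elem_of:
  assumes "finite c" "card c = k"
  shows "(\<Sum>a=1..k. g (elem_of c a)) = (\<Sum>x\<in>c. g x)"
  using sum.reindex_bij_betw[OF elem_of_basic(1)[OF assms], of g] by simp

lemma neg_one_pow_sq: "((-1::'a::comm_ring_1) ^ m) * (-1) ^ m = 1"
  by (simp add: minus_one_power_iff)

lemma sgn_alt:
  assumes "finite c" "\<forall>x\<in>c. 1 \<le> x"
  shows "(sgn_sub c :: 'a::comm_ring_1) = (-1) ^ (\<Sum> c) * (-1) ^ (\<Sum>a=1..card c. a)"
proof -
  let ?k = "card c"
  let ?s1 = "\<Sum>a=1..?k. elem_of c a - a" and ?s2 = "\<Sum>a=1..?k. a"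
  have "?s1 + ?s2 = (\<Sum>a=1..?k. elem_of c a - a + a)" by (simp add: sum.distrib)
  also have "\<dots> = (\<Sum>a=1..?k. elem_of c a)"
    using elem_of_ge[OF assms(1) refl _ assms(2)] by (intro sum.cong) auto
  also have "\<dots> = \<Sum> c" using sum_elem_of[OF assms(1) refl, of "\<lambda>x. x"] by simp
  finally have eq: "?s1 + ?s2 = \<Sum> c" .
  have "(sgn_sub c :: 'a) = (-1) ^ ?s1" unfolding sgn_sub_def by simp
  also have "\<dots> = (-1) ^ (?s1 + ?s2) * (-1) ^ ?s2"
    by (simp add: power_add mult.assoc neg_one_pow_sq)
  finally show ?thesis using eq by simp
qed

lemma elem_of_insert1:
  assumes "finite d" "card d = m" "\<forall>x\<in>d. 2 \<le> x" "b \<in> {1..Suc m}"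
  shows "elem_of (insert 1 d) b = (if b = 1 then 1 else elem_of d (b - 1))"
proof (rule elem_of_unique[where f = "\<lambda>b. if b = 1 then 1 else elem_of d (b - 1)"])
  show "finite (insert 1 d)" using assms(1) by simp
  have "1 \<notin> d" using assms(3) by auto
  then show "card (insert 1 d) = Suc m" using assms(1,2) by simp
  have bij: "bij_betw (elem_of d) {1..m} d" by (rule elem_of_basic(1)[OF assms(1,2)])
  show "(\<lambda>b. if b = 1 then 1 else elem_of d (b - 1)) ` {1..Suc m} = insert 1 d"
  proof
    show "(\<lambda>b. if b = 1 then 1 else elem_of d (b - 1)) ` {1..Suc m} \<subseteq> insert 1 d"
    proof
      fix y assume "y \<in> (\<lambda>b. if b = 1 then 1 else elem_of d (b - 1)) ` {1..Suc m}"
      then obtain b where "b \<in> {1..Suc m}" "y = (if b = 1 then 1 else elem_of d (b - 1))" by blast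
      moreover have "b \<noteq> 1 \<Longrightarrow> b - 1 \<in> {1..m}" using \<open>b \<in> {1..Suc m}\<close> by auto
      ultimately show "y \<in> insert 1 d" using elem_of_in[OF assms(1,2), of "b-1"] by (cases "b = 1") auto
    qed
    show "insert 1 d \<subseteq> (\<lambda>b. if b = 1 then 1 else elem_of d (b - 1)) ` {1..Suc m}"
    proof
      fix x assume "x \<in> insert 1 d"
      then show "x \<in> (\<lambda>b. if b = 1 then 1 else elem_of d (b - 1)) ` {1..Suc m}"
      proof
        assume "x = 1" then show ?thesis by (intro image_eqI[of _ _ 1]) auto
      next
        assume "x \<in> d"
        then obtain a where "a \<in> {1..m}" "x = elem_of d a" using bij by (metis bij_betw_iff_bijections)
        then show ?thesis by (intro image_eqI[of _ _ "Suc a"]) auto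
      qed
    qed
  qed
  fix a b assume ab: "a \<in> {1..Suc m}" "b \<in> {1..Suc m}" "a < b"
  then have b1: "b \<noteq> 1" "b - 1 \<in> {1..m}" by auto
  show "(if a = 1 then 1 else elem_of d (a - 1)) < (if b = 1 then 1 else elem_of d (b - 1))"
  proof (cases "a = 1")
    case True
    then show ?thesis using b1 elem_of_in[OF assms(1,2) b1(2)] assms(3) by auto
  next
    case False
    then have "a - 1 \<in> {1..m}" "a - 1 < b - 1" using ab by auto
    then show ?thesis using False b1 elem_of_mono(1)[OF assms(1,2)] by auto
  qed
qed (use assms in auto)

lemma elem_of_remove:
  assumes "finite e" "card e = k" "a \<in> {1..k}" "b \<in> {1..k - 1}"
  shows "elem_of (e - {elem_of e a}) b = (if b < a then elem_of e b else elem_of e (Suc b))"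
proof (rule elem_of_unique[where f = "\<lambda>b. if b < a then elem_of e b else elem_of e (Suc b)"])
  show "finite (e - {elem_of e a})" using assms(1) by simp
  show "card (e - {elem_of e a}) = k - 1" using assms elem_of_in[OF assms(1-3)] by simp
  have bij: "bij_betw (elem_of e) {1..k} e" by (rule elem_of_basic(1)[OF assms(1,2)])
  let ?f = "\<lambda>b. if b < a then elem_of e b else elem_of e (Suc b)"
  show "?f ` {1..k - 1} = e - {elem_of e a}"
  proof
    show "?f ` {1..k - 1} \<subseteq> e - {elem_of e a}"
    proof
      fix y assume "y \<in> ?f ` {1..k - 1}"
      then obtain b where b: "b \<in> {1..k-1}" "y = ?f b" by auto
      show "y \<in> e - {elem_of e a}"
      proof (cases "b < a")
        case True
        then show ?thesis using b assms elem_of_in[OF assms(1,2)] elem_of_mono(2)[OF assms(1,2) _ assms(3)] by auto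
      next
        case False
        then have sb: "Suc b \<in> {1..k}" "Suc b \<noteq> a" using b by auto
        then show ?thesis using b False elem_of_in[OF assms(1,2) sb(1)] elem_of_mono(2)[OF assms(1,2) sb(1) assms(3)] by auto
      qed
    qed
    show "e - {elem_of e a} \<subseteq> ?f ` {1..k - 1}"
    proof
      fix x assume x: "x \<in> e - {elem_of e a}"
      then obtain g where g: "g \<in> {1..k}" "x = elem_of e g" using bij by (metis DiffD1 bij_betw_iff_bijections)
      then have "g \<noteq> a" using x by auto
      show "x \<in> ?f ` {1..k - 1}"
      proof (cases "g < a")
        case True
        then show ?thesis using g assms(3) by (intro image_eqI[of _ _ g]) auto
      next
        case False
        then show ?thesis using g assms(3) \<open>g \<noteq> a\<close> by (intro image_eqI[of _ _ "g - 1"]) auto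
      qed
    qed
  qed
  fix c d assume cd: "c \<in> {1..k - 1}" "d \<in> {1..k - 1}" "c < d"
  show "?f c < ?f d"
    using cd elem_of_mono(1)[OF assms(1,2)] by auto
qed (use assms in auto)

lemma powi_neg_one: "((-1::'a::field) powi (int a - int b)) = (-1) ^ (a + b)"
  by (simp add: power_int_minus_left minus_one_power_iff even_add)

lemma parity_aux: "((-1::'a::comm_ring_1) ^ (x + s)) * (-1) ^ (a + x) = (-1) ^ (s + a)"
  by (simp add: minus_one_power_iff even_add)

lemma parity_aux2: "1 \<le> a \<Longrightarrow> ((-1::'a::comm_ring_1) ^ (1 + s)) * (-1) ^ (a - 1) = (-1) ^ (s + a)"
  by (simp add: minus_one_power_iff even_add)



lemma main_identity:
  fixes X :: "nat \<Rightarrow> nat \<Rightarrow> 'a::field" and z :: "nat \<Rightarrow> 'a"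
  assumes k: "1 \<le> k" and kn: "k \<le> n" and X1: "\<And>j. j \<in> {1..k} \<Longrightarrow> X 1 j = (\<Sum>i=2..n. z i * X i j)"
  shows "cullis_det n k X = (\<Sum>e | e \<subseteq> {2..n} \<and> card e = k. sgn_sub e * det_k k (rowsub e X) *
            (1 + (\<Sum>a=1..k. z (elem_of e a) * (-1) powi (int a - int (elem_of e a)))))"
proof -
  define S where "S = {c. c \<subseteq> {1..n} \<and> card c = k}"
  define P where "P = {e. e \<subseteq> {2..n} \<and> card e = k}"
  define Q where "Q = {d. d \<subseteq> {2..n} \<and> card d = k - 1}"
  define f where "f c = sgn_sub c * det_k k (rowsub c X)" for c
  define D where "D d i = det_k k (\<lambda>b j. if b = 1 then X i j else rowsub (insert 1 d) X b j)" for d i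
  define G where "G d i = sgn_sub (insert 1 d) * (z i * D d i)" for d i
  define h where "h = (\<lambda>(e, a). (e - {elem_of e a}, elem_of e a))"
  have finS: "finite S" unfolding S_def by (rule finite_subset[of _ "Pow {1..n}"]) auto
  have finP: "finite P" unfolding P_def by (rule finite_subset[of _ "Pow {2..n}"]) auto
  have finQ: "finite Q" unfolding Q_def by (rule finite_subset[of _ "Pow {2..n}"]) auto
  have "cullis_det n k X = sum f S" unfolding cullis_det_def S_def f_def by simp
  also have "\<dots> = sum f (S \<inter> {c. 1 \<notin> c}) + sum f (S - {c. 1 \<notin> c})"
    by (rule sum.Int_Diff[OF finS])
  also have "S \<inter> {c. 1 \<notin> c} = P"
  proof -
    have "\<And>c. (c \<subseteq> {1..n} \<and> 1 \<notin> c) \<longleftrightarrow> c \<subseteq> {2..n}"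
    proof (intro iffI conjI)
      fix c :: "nat set" assume "c \<subseteq> {1..n} \<and> 1 \<notin> c"
      then show "c \<subseteq> {2..n}" by (auto simp: subset_iff) (metis le_antisym not_less_eq_eq numeral_2_eq_2 One_nat_def)
    qed auto
    then show ?thesis unfolding S_def P_def by auto
  qed
  also have "S - {c. 1 \<notin> c} = insert 1 ` Q"
  proof
    show "S - {c. 1 \<notin> c} \<subseteq> insert 1 ` Q"
    proof
      fix c assume c: "c \<in> S - {c. 1 \<notin> c}"
      then have c1: "c \<subseteq> {1..n}" "card c = k" "1 \<in> c" unfolding S_def by auto
      then have "c - {1} \<subseteq> {2..n}" by (auto simp: subset_iff)
      moreover have "card (c - {1}) = k - 1" using c1 by (simp add: card_Diff_singleton)
      ultimately have "c - {1} \<in> Q" unfolding Q_def by simp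
      moreover have "c = insert 1 (c - {1})" using c by auto
      ultimately show "c \<in> insert 1 ` Q" by blast
    qed
    show "insert 1 ` Q \<subseteq> S - {c. 1 \<notin> c}"
    proof
      fix c assume "c \<in> insert 1 ` Q"
      then obtain d where d: "d \<in> Q" "c = insert 1 d" by auto
      then have "1 \<notin> d" "finite d" unfolding Q_def by (auto intro: finite_subset)
      then show "c \<in> S - {c. 1 \<notin> c}" using d k kn unfolding S_def Q_def by auto
    qed
  qed
  also have "sum f (insert 1 ` Q) = (\<Sum>d\<in>Q. f (insert 1 d))"
  proof (rule sum.reindex[unfolded comp_def])
    show "inj_on (insert 1) Q"
    proof (rule inj_onI)
      fix d d' assume "d \<in> Q" "d' \<in> Q" "insert 1 d = insert 1 d'"
      moreover have "1 \<notin> d" "1 \<notin> d'" using \<open>d \<in> Q\<close> \<open>d' \<in> Q\<close> unfolding Q_def by auto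
      ultimately show "d = d'" by (metis insert_ident)
    qed
  qed
  also have "\<dots> = (\<Sum>d\<in>Q. \<Sum>i\<in>{2..n} - d. G d i)"
  proof (rule sum.cong[OF refl])
    fix d assume dQ: "d \<in> Q"
    then have fd: "finite d" and cd: "card d = k - 1" and d2: "\<forall>x\<in>d. 2 \<le> x" and dn: "d \<subseteq> {2..n}"
      unfolding Q_def by (auto intro: finite_subset)
    have Sk: "Suc (k - 1) = k" using k by simp
    have ins: "\<And>b. b \<in> {1..k} \<Longrightarrow> elem_of (insert 1 d) b = (if b = 1 then 1 else elem_of d (b - 1))"
      using elem_of_insert1[OF fd cd d2] Sk by simp
    have "det_k k (rowsub (insert 1 d) X) =
        det_k k (\<lambda>b j. if b = 1 then (\<Sum>i\<in>{2..n}. z i * X i j) else rowsub (insert 1 d) X b j)"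
    proof (rule det_cong)
      fix b j assume "b \<in> {1..k}" "j \<in> {1..k}"
      moreover have e1: "elem_of (insert 1 d) 1 = 1" using ins[of 1] k by simp
      ultimately show "rowsub (insert 1 d) X b j =
        (if b = 1 then (\<Sum>i\<in>{2..n}. z i * X i j) else rowsub (insert 1 d) X b j)"
        using X1[of j] by (auto simp: rowsub_def)
    qed
    also have "\<dots> = (\<Sum>i\<in>{2..n}. z i * D d i)" unfolding D_def by (rule det_lin1[OF k]) simp
    also have "\<dots> = (\<Sum>i\<in>{2..n} - d. z i * D d i)"
    proof (rule sum.mono_neutral_right, simp, blast, rule ballI)
      fix i assume "i \<in> {2..n} - ({2..n} - d)"
      then have "i \<in> d" by auto
      then obtain g where g: "g \<in> {1..k-1}" "elem_of d g = i"
        using elem_of_basic(1)[OF fd cd] by (metis bij_betw_iff_bijections)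
      have "D d i = 0" unfolding D_def
      proof (rule det_alt[of 1 k "Suc g"])
        show "1 \<in> {1..k}" "Suc g \<in> {1..k}" "1 \<noteq> Suc g" using g k by auto
        then have "elem_of (insert 1 d) (Suc g) = i" using ins[of "Suc g"] g by simp
        then show "\<And>j. (if 1 = 1 then X i j else rowsub (insert 1 d) X 1 j) =
          (if Suc g = 1 then X i j else rowsub (insert 1 d) X (Suc g) j)"
          by (simp add: rowsub_def)
      qed
      then show "z i * D d i = 0" by simp
    qed
    finally show "f (insert 1 d) = (\<Sum>i\<in>{2..n} - d. G d i)"
      unfolding f_def G_def by (simp add: sum_distrib_left)
  qed
  also have "\<dots> = sum (\<lambda>(d, i). G d i) (Sigma Q (\<lambda>d. {2..n} - d))"
    by (rule sum.Sigma[OF finQ]) auto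
  also have "\<dots> = sum (\<lambda>x. (\<lambda>(d, i). G d i) (h x)) (P \<times> {1..k})"
  proof (rule sum.reindex_bij_betw[symmetric])
    show "bij_betw h (P \<times> {1..k}) (Sigma Q (\<lambda>d. {2..n} - d))"
    proof (rule bij_betw_imageI)
      show "inj_on h (P \<times> {1..k})"
      proof (rule inj_onI, clarify)
        fix e a e' a' assume e: "e \<in> P" "a \<in> {1..k}" "e' \<in> P" "a' \<in> {1..k}" and eq: "h (e, a) = h (e', a')"
        have fe: "finite e" "card e = k" "finite e'" "card e' = k" using e unfolding P_def by (auto intro: finite_subset)
        have x: "elem_of e a = elem_of e' a'" and dd: "e - {elem_of e a} = e' - {elem_of e' a'}"
          using eq unfolding h_def by auto
        have "elem_of e a \<in> e" "elem_of e' a' \<in> e'"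
          using elem_of_in fe e by blast+
        then have "e = e'" using x dd by (metis insert_Diff)
        then show "e = e' \<and> a = a'" using x elem_of_mono(2)[OF fe(3,4) e(2) e(4)] by simp
      qed
      show "h ` (P \<times> {1..k}) = Sigma Q (\<lambda>d. {2..n} - d)"
      proof
        show "h ` (P \<times> {1..k}) \<subseteq> Sigma Q (\<lambda>d. {2..n} - d)"
        proof
          fix y assume "y \<in> h ` (P \<times> {1..k})"
          then obtain e a where e: "e \<in> P" "a \<in> {1..k}" and y: "y = h (e, a)" by auto
          have fe: "finite e" "card e = k" using e unfolding P_def by (auto intro: finite_subset)
          have xe: "elem_of e a \<in> e" using elem_of_in fe e by blast
          then show "y \<in> Sigma Q (\<lambda>d. {2..n} - d)"
            using e fe unfolding y h_def P_def Q_def by auto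
        qed
        show "Sigma Q (\<lambda>d. {2..n} - d) \<subseteq> h ` (P \<times> {1..k})"
        proof
          fix y assume "y \<in> Sigma Q (\<lambda>d. {2..n} - d)"
          then obtain d i where d: "d \<in> Q" "i \<in> {2..n}" "i \<notin> d" and y: "y = (d, i)" by auto
          have fd: "finite d" "card d = k - 1" using d unfolding Q_def by (auto intro: finite_subset)
          let ?e = "insert i d"
          have eP: "?e \<in> P" using d fd k unfolding P_def Q_def by auto
          have fe: "finite ?e" "card ?e = k" using fd d k by auto
          obtain a where a: "a \<in> {1..k}" "elem_of ?e a = i"
            using elem_of_basic(1)[OF fe] by (metis bij_betw_iff_bijections insertI1)
          have "h (?e, a) = (d, i)" using a d unfolding h_def by auto
          then show "y \<in> h ` (P \<times> {1..k})" unfolding y using eP a by (metis SigmaI image_eqI)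
        qed
      qed
    qed
  qed
  also have "\<dots> = (\<Sum>e\<in>P. \<Sum>a=1..k. sgn_sub e * det_k k (rowsub e X) *
            (z (elem_of e a) * (-1) powi (int a - int (elem_of e a))))"
  proof -
    have "sum (\<lambda>x. (\<lambda>(d, i). G d i) (h x)) (P \<times> {1..k}) = (\<Sum>e\<in>P. \<Sum>a=1..k. G (e - {elem_of e a}) (elem_of e a))"
      unfolding h_def by (simp add: sum.cartesian_product split_def)
    also have "\<dots> = (\<Sum>e\<in>P. \<Sum>a=1..k. sgn_sub e * det_k k (rowsub e X) *
            (z (elem_of e a) * (-1) powi (int a - int (elem_of e a))))"
    proof (intro sum.cong refl)
      fix e a assume eP: "e \<in> P" and a: "a \<in> {1..k}"
      have fe: "finite e" "card e = k" and e2: "\<forall>x\<in>e. 2 \<le> x" using eP unfolding P_def by (auto intro: finite_subset)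
      define x where "x = elem_of e a"
      define d where "d = e - {x}"
      have xe: "x \<in> e" unfolding x_def using elem_of_in fe a by blast
      have fd: "finite d" "card d = k - 1" "\<forall>x\<in>d. 2 \<le> x" unfolding d_def using fe e2 xe by auto
      have Sk: "Suc (k - 1) = k" using k by simp
      have ins: "\<And>b. b \<in> {1..k} \<Longrightarrow> elem_of (insert 1 d) b = (if b = 1 then 1 else elem_of d (b - 1))"
        using elem_of_insert1[OF fd] Sk by simp
      have rem: "\<And>b. b \<in> {1..k-1} \<Longrightarrow> elem_of d b = (if b < a then elem_of e b else elem_of e (Suc b))"
        unfolding d_def x_def using elem_of_remove[OF fe a] by simp
      have cp: "cyc a permutes {1..k}" "sign (cyc a) = (-1) ^ (a - 1)" using cyc_props[of a k] a by auto
      have "D d x = det_k k (\<lambda>b j. rowsub e X (cyc a b) j)"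
        unfolding D_def
      proof (rule det_cong)
        fix b j assume b: "b \<in> {1..k}" "j \<in> {1..k}"
        show "(if b = 1 then X x j else rowsub (insert 1 d) X b j) = rowsub e X (cyc a b) j"
        proof (cases "b = 1")
          case True then show ?thesis by (simp add: rowsub_def cyc_def x_def)
        next
          case False
          then have "b - 1 \<in> {1..k-1}" using b by auto
          then show ?thesis using False b rem[of "b - 1"] ins[of b]
            by (auto simp: rowsub_def cyc_def)
        qed
      qed
      also have "\<dots> = (-1) ^ (a - 1) * det_k k (rowsub e X)"
        using det_rows_perm[OF cp(1), of "rowsub e X"] cp(2) by simp
      finally have Dx: "D d x = (-1) ^ (a - 1) * det_k k (rowsub e X)" .
      have "1 \<notin> d" using fd(3) by auto
      then have ci: "card (insert 1 d) = k" "\<Sum> (insert 1 d) = 1 + \<Sum> d" using fd Sk by auto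
      have se: "\<Sum> e = x + \<Sum> d" unfolding d_def using fe(1) xe by (simp add: sum.remove)
      have sg1: "(sgn_sub (insert 1 d) :: 'a) = (-1) ^ (1 + \<Sum> d) * (-1) ^ (\<Sum>b=1..k. b)"
      proof -
        have "\<forall>x\<in>insert 1 d. 1 \<le> x" using fd(3) by auto
        then show ?thesis using sgn_alt[of "insert 1 d"] fd(1) ci by simp
      qed
      have sg2: "(sgn_sub e :: 'a) = (-1) ^ (x + \<Sum> d) * (-1) ^ (\<Sum>b=1..k. b)"
      proof -
        have "\<forall>x\<in>e. 1 \<le> x" using e2 by auto
        then show ?thesis using sgn_alt[of e] fe se by simp
      qed
      have pw: "((-1::'a) ^ (1 + \<Sum> d)) * (-1) ^ (a - 1) = (-1) ^ (x + \<Sum> d) * (-1) ^ (a + x)"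
      proof -
        have a1: "1 \<le> a" using a by simp
        show ?thesis using parity_aux[of x "\<Sum> d" a] parity_aux2[OF a1, of "\<Sum> d"] by (metis (no_types))
      qed
      have "G d x = ((-1::'a) ^ (1 + \<Sum> d) * (-1) ^ (a - 1)) * (-1) ^ (\<Sum>b=1..k. b) * z x * det_k k (rowsub e X)"
        unfolding G_def Dx sg1 by (simp add: mult_ac)
      also have "\<dots> = sgn_sub e * det_k k (rowsub e X) * (z x * (-1) powi (int a - int x))"
        unfolding pw sg2 powi_neg_one by (simp add: mult_ac)
      finally show "G (e - {elem_of e a}) (elem_of e a) = sgn_sub e * det_k k (rowsub e X) *
            (z (elem_of e a) * (-1) powi (int a - int (elem_of e a)))"
        unfolding d_def x_def .
    qed
    finally show ?thesis .
  qed
  finally show ?thesis unfolding P_def f_def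
    by (simp add: sum.distrib[symmetric] sum_distrib_left algebra_simps)
qed

lemma X1_from_z:
  fixes X :: "nat \<Rightarrow> nat \<Rightarrow> 'a::field"
  assumes "1 \<le> n" "z 1 = -1" "(\<Sum>i=1..n. z i * X i j) = 0"
  shows "X 1 j = (\<Sum>i=2..n. z i * X i j)"
proof -
  have "(\<Sum>i=1..n. z i * X i j) = z 1 * X 1 j + (\<Sum>i=2..n. z i * X i j)"
    using assms(1) by (simp add: sum.atLeast_Suc_atMost numeral_2_eq_2)
  then show ?thesis using assms(2,3) by simp
qed

theorem mainTheorem5:
  fixes z :: "nat \<Rightarrow> 'a::field" and n k :: nat
  assumes "1 \<le> k" and "k \<le> n" and "z 1 = -1"
  shows "(\<forall>X :: nat \<Rightarrow> nat \<Rightarrow> 'a.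
            (\<forall>j\<in>{1..k}. (\<Sum>i=1..n. z i * X i j) = 0) \<longrightarrow> cullis_det n k X = 0)
     \<longleftrightarrow> (\<forall>c. c \<subseteq> {1..n} \<and> card c = k \<and> 1 \<notin> c \<longrightarrow>
            1 + (\<Sum>\<alpha>=1..k. z (elem_of c \<alpha>) * (-1) powi (int \<alpha> - int (elem_of c \<alpha>))) = 0)"
proof
  assume H: "\<forall>X :: nat \<Rightarrow> nat \<Rightarrow> 'a.
            (\<forall>j\<in>{1..k}. (\<Sum>i=1..n. z i * X i j) = 0) \<longrightarrow> cullis_det n k X = 0"
  show "\<forall>c. c \<subseteq> {1..n} \<and> card c = k \<and> 1 \<notin> c \<longrightarrow>
            1 + (\<Sum>\<alpha>=1..k. z (elem_of c \<alpha>) * (-1) powi (int \<alpha> - int (elem_of c \<alpha>))) = 0"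
  proof (intro allI impI)
    fix c :: "nat set" assume c: "c \<subseteq> {1..n} \<and> card c = k \<and> 1 \<notin> c"
    have fc: "finite c" "card c = k" using c by (auto intro: finite_subset)
    define C where "C e = (1 + (\<Sum>\<alpha>=1..k. z (elem_of e \<alpha>) * (-1) powi (int \<alpha> - int (elem_of e \<alpha>))))" for e
    define P where "P = {e. e \<subseteq> {2..n} \<and> card e = k}"
    have finP: "finite P" unfolding P_def by (rule finite_subset[of _ "Pow {2..n}"]) auto
    have c2: "c \<subseteq> {2..n}" using c by (auto simp: subset_iff) (metis le_antisym not_less_eq_eq numeral_2_eq_2 One_nat_def)
    have cP: "c \<in> P" using c2 fc unfolding P_def by simp
    define Y where "Y i j = (if i = elem_of c j then 1 else (0::'a))" for i j
    define X where "X i j = (if i = 1 then (\<Sum>i'=2..n. z i' * Y i' j) else Y i j)" for i j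
    have X1: "\<And>j. X 1 j = (\<Sum>i=2..n. z i * X i j)"
      unfolding X_def by simp
    have "\<forall>j\<in>{1..k}. (\<Sum>i=1..n. z i * X i j) = 0"
    proof
      fix j
      have "(\<Sum>i=1..n. z i * X i j) = z 1 * X 1 j + (\<Sum>i=2..n. z i * X i j)"
        using assms by (simp add: sum.atLeast_Suc_atMost numeral_2_eq_2)
      then show "(\<Sum>i=1..n. z i * X i j) = 0" using X1[of j] assms(3) by simp
    qed
    then have "cullis_det n k X = 0" using H by blast
    moreover have "cullis_det n k X = (\<Sum>e\<in>P. sgn_sub e * det_k k (rowsub e X) * C e)"
      unfolding P_def C_def by (rule main_identity[OF assms(1,2)]) (rule X1)
    ultimately have "(\<Sum>e\<in>P. sgn_sub e * det_k k (rowsub e X) * C e) = 0" by simp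
    moreover have "(\<Sum>e\<in>P. sgn_sub e * det_k k (rowsub e X) * C e) = sgn_sub c * det_k k (rowsub c X) * C c
        + (\<Sum>e\<in>P - {c}. sgn_sub e * det_k k (rowsub e X) * C e)"
      by (rule sum.remove[OF finP cP])
    moreover have "(\<Sum>e\<in>P - {c}. sgn_sub e * det_k k (rowsub e X) * C e) = 0"
    proof (rule sum.neutral, rule ballI)
      fix e assume e: "e \<in> P - {c}"
      have fe: "finite e" "card e = k" "e \<subseteq> {2..n}" using e unfolding P_def by (auto intro: finite_subset)
      have "\<not> e \<subseteq> c"
      proof
        assume "e \<subseteq> c"
        then have "e = c" using card_subset_eq[OF fc(1)] fe(2) fc(2) by metis
        then show False using e by simp
      qed
      then obtain x where x: "x \<in> e" "x \<notin> c" by blast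
      obtain b where b: "b \<in> {1..k}" "elem_of e b = x"
        using elem_of_basic(1)[OF fe(1,2)] x by (metis bij_betw_iff_bijections)
      have x1: "x \<noteq> 1" using x fe by auto
      have "det_k k (rowsub e X) = 0"
      proof (rule det_zero_row[OF b(1)])
        fix j assume j: "j \<in> {1..k}"
        have "elem_of c j \<in> c" using elem_of_in[OF fc j] .
        then show "rowsub e X b j = 0" using x x1 b unfolding rowsub_def X_def Y_def by auto
      qed
      then show "sgn_sub e * det_k k (rowsub e X) * C e = 0" by simp
    qed
    moreover have "det_k k (rowsub c X) = 1"
    proof -
      have "det_k k (rowsub c X) = det_k k (\<lambda>i j. if i = j then 1 else 0)"
      proof (rule det_cong)
        fix i j assume ij: "i \<in> {1..k}" "j \<in> {1..k}"
        have "elem_of c i \<noteq> 1" using elem_of_in[OF fc ij(1)] c by auto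
        then show "rowsub c X i j = (if i = j then 1 else 0)"
          unfolding rowsub_def X_def Y_def using elem_of_mono(2)[OF fc ij] by simp
      qed
      then show ?thesis by (simp add: det_id)
    qed
    moreover have "(sgn_sub c :: 'a) \<noteq> 0" unfolding sgn_sub_def by simp
    ultimately have "C c = 0" by simp
    then show "1 + (\<Sum>\<alpha>=1..k. z (elem_of c \<alpha>) * (-1) powi (int \<alpha> - int (elem_of c \<alpha>))) = 0"
      unfolding C_def .
  qed
next
  assume H: "\<forall>c. c \<subseteq> {1..n} \<and> card c = k \<and> 1 \<notin> c \<longrightarrow>
            1 + (\<Sum>\<alpha>=1..k. z (elem_of c \<alpha>) * (-1) powi (int \<alpha> - int (elem_of c \<alpha>))) = 0"
  show "\<forall>X :: nat \<Rightarrow> nat \<Rightarrow> 'a.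
            (\<forall>j\<in>{1..k}. (\<Sum>i=1..n. z i * X i j) = 0) \<longrightarrow> cullis_det n k X = 0"
  proof (intro allI impI)
    fix X :: "nat \<Rightarrow> nat \<Rightarrow> 'a"
    assume hX: "\<forall>j\<in>{1..k}. (\<Sum>i=1..n. z i * X i j) = 0"
    have X1: "\<And>j. j \<in> {1..k} \<Longrightarrow> X 1 j = (\<Sum>i=2..n. z i * X i j)"
      using X1_from_z[of n z X] hX assms by auto
    have "cullis_det n k X = (\<Sum>e | e \<subseteq> {2..n} \<and> card e = k. sgn_sub e * det_k k (rowsub e X) *
            (1 + (\<Sum>a=1..k. z (elem_of e a) * (-1) powi (int a - int (elem_of e a)))))"
      by (rule main_identity[OF assms(1,2)]) (rule X1)
    also have "\<dots> = 0"
    proof (rule sum.neutral, rule ballI)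
      fix e assume e: "e \<in> {e. e \<subseteq> {2..n} \<and> card e = k}"
      then have "e \<subseteq> {1..n} \<and> card e = k \<and> 1 \<notin> e" by auto
      then show "sgn_sub e * det_k k (rowsub e X) *
            (1 + (\<Sum>a=1..k. z (elem_of e a) * (-1) powi (int a - int (elem_of e a)))) = 0"
        using H by simp
    qed
    finally show "cullis_det n k X = 0" .
  qed
qed

end
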